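(* For every $n\ge5$ there exist perfect copositive $n\times n$ matrices in $\mathcal{COP}^n\setminus(\mathcal{S}^n_{\ge0}+\mathcal{N}^n)$ (exceptional perfect copositive matrices).
   Context: $\mathcal{S}^n$: real symmetric $n\times n$ matrices; $\mathcal{S}^n_{\ge0}$: positive semidefinite ones; $\mathcal{N}^n$: entrywise nonnegative symmetric ones; $B[v]=v^\top Bv$; $\mathcal{COP}^n=\{B\in\mathcal{S}^n: B[x]\ge0\ \forall x\in\mathbb{R}^n_{\ge0}\}$; strictly copositive means lying in the interior of $\mathcal{COP}^n$. $\min_{\mathcal{COP}}B=\inf\{B[v]: v\in\mathbb{Z}^n_{\ge0}\setminus\{0\}\}$, $\operatorname{Min}_{\mathcal{COP}}B=\{v\in\mathbb{Z}^n_{\ge0}: B[v]=\min_{\mathcal{COP}}B\}$. A strictly copositive $P$ is perfect copositive if it is the unique $Q\in\mathcal{S}^n$ with $Q[v]=\min_{\mathcal{COP}}P$ for all $v\in\operatorname{Min}_{\mathcal{COP}}P$. *)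

theory Defs
  imports "HOL-Analysis.Analysis"
begin

text \<open>n x n real matrices are rendered as real^'n^'n, the dimension n = CARD('n).\<close>

definition sym_mat :: "real^'n^'n \<Rightarrow> bool" where
  "sym_mat B \<longleftrightarrow> transpose B = B"

definition qf :: "real^'n^'n \<Rightarrow> real^'n \<Rightarrow> real" where
  "qf B v = v \<bullet> (B *v v)"

definition nonneg_vec :: "real^'n \<Rightarrow> bool" where
  "nonneg_vec x \<longleftrightarrow> (\<forall>i. 0 \<le> x $ i)"

definition int_vec :: "real^'n \<Rightarrow> bool" where
  "int_vec x \<longleftrightarrow> (\<forall>i. x $ i \<in> \<int>)"

definition COP :: "(real^'n^'n) set" where
  "COP = {B. sym_mat B \<and> (\<forall>x. nonneg_vec x \<longrightarrow> 0 \<le> qf B x)}"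

definition strictly_copositive :: "real^'n^'n \<Rightarrow> bool" where
  "strictly_copositive B \<longleftrightarrow> B \<in> COP \<and>
     (\<exists>e>0. \<forall>Q. sym_mat Q \<and> dist Q B < e \<longrightarrow> Q \<in> COP)"

definition min_COP :: "real^'n^'n \<Rightarrow> real" where
  "min_COP B = Inf {qf B v | v. int_vec v \<and> nonneg_vec v \<and> v \<noteq> 0}"

definition Min_COP :: "real^'n^'n \<Rightarrow> (real^'n) set" where
  "Min_COP B = {v. int_vec v \<and> nonneg_vec v \<and> qf B v = min_COP B}"

definition perfect_copositive :: "real^'n^'n \<Rightarrow> bool" where
  "perfect_copositive P \<longleftrightarrow> strictly_copositive P \<and>
     (\<exists>!Q. sym_mat Q \<and> (\<forall>v\<in>Min_COP P. qf Q v = min_COP P)) \<and>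
     sym_mat P \<and> (\<forall>v\<in>Min_COP P. qf P v = min_COP P)"

definition PSD :: "(real^'n^'n) set" where
  "PSD = {S. sym_mat S \<and> (\<forall>x. 0 \<le> qf S x)}"

definition NN :: "(real^'n^'n) set" where
  "NN = {N. sym_mat N \<and> (\<forall>i j. 0 \<le> N $ i $ j)}"

definition PSD_plus_NN :: "(real^'n^'n) set" where
  "PSD_plus_NN = {S + N | S N. S \<in> PSD \<and> N \<in> NN}"

end

theory Submission
  imports Defs
begin

lemma qf_expand: "qf Q x = (\<Sum>i\<in>UNIV. \<Sum>j\<in>UNIV. Q$i$j * x$i * x$j)"
  unfolding qf_def inner_vec_def matrix_vector_mult_def
  by (simp add: sum_distrib_left algebra_simps)

lemma qf_add_mat: "qf (Q + R) x = qf Q x + qf R x"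
  unfolding qf_expand by (simp add: algebra_simps sum.distrib)

lemma qf_diff_mat: "qf (Q - R) x = qf Q x - qf R x"
  unfolding qf_expand by (simp add: algebra_simps sum_subtractf)

lemma qf_scale: "qf Q (c *\<^sub>R x) = c^2 * qf Q x"
  unfolding qf_expand by (simp add: sum_distrib_left power2_eq_square algebra_simps)

lemma qf_zero: "qf Q 0 = 0"
  unfolding qf_expand by simp

lemma qf_bound:
  fixes D :: "real^'n::finite^'n"
  assumes "nonneg_vec z"
  shows "\<bar>qf D z\<bar> \<le> norm D * (\<Sum>i\<in>UNIV. z$i)^2"
proof -
  have "\<bar>qf D z\<bar> \<le> (\<Sum>i\<in>UNIV. \<Sum>j\<in>UNIV. \<bar>D$i$j * z$i * z$j\<bar>)"
    unfolding qf_expand by (rule order_trans[OF sum_abs]) (intro sum_mono sum_abs)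
  also have "\<dots> \<le> (\<Sum>i\<in>UNIV. \<Sum>j\<in>UNIV. norm D * z$i * z$j)"
  proof (intro sum_mono)
    fix i j
    have "\<bar>D$i$j\<bar> \<le> norm D"
      using Finite_Cartesian_Product.norm_nth_le[of "D$i" j] Finite_Cartesian_Product.norm_nth_le[of D i] by simp
    moreover have "0 \<le> z$i" "0 \<le> z$j" using assms unfolding nonneg_vec_def by auto
    ultimately show "\<bar>D$i$j * z$i * z$j\<bar> \<le> norm D * z$i * z$j"
      by (simp add: abs_mult mult_right_mono)
  qed
  also have "\<dots> = norm D * (\<Sum>i\<in>UNIV. z$i)^2"
    by (simp add: power2_eq_square sum_distrib_left sum_distrib_right algebra_simps)
  finally show ?thesis .
qed

lemma strictly_copositive_from_pos:
  fixes P :: "real^'n::finite^'n"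
  assumes sym: "sym_mat P" and pos: "\<And>x. nonneg_vec x \<Longrightarrow> x \<noteq> 0 \<Longrightarrow> 0 < qf P x"
  shows "strictly_copositive P"
proof -
  define S where "S = {x::real^'n. (\<forall>i. 0 \<le> x$i) \<and> (\<Sum>i\<in>UNIV. x$i) = 1}"
  have "closed S"
  proof -
    have "S = {x. \<forall>i. 0 \<le> x$i} \<inter> {x::real^'n. (\<Sum>i\<in>UNIV. x$i) = 1}" unfolding S_def by auto
    moreover have "closed {x::real^'n. \<forall>i. 0 \<le> x$i}"
      by (intro closed_Collect_all closed_Collect_le continuous_intros)
    moreover have "closed {x::real^'n. (\<Sum>i\<in>UNIV. x$i) = 1}"
      by (intro closed_Collect_eq continuous_intros)
    ultimately show ?thesis by auto
  qed
  moreover have "bounded S"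
    unfolding bounded_iff
  proof (intro exI ballI)
    fix x assume "x \<in> S"
    have "norm x \<le> (\<Sum>i\<in>UNIV. \<bar>x$i\<bar>)" by (rule norm_le_l1_cart)
    also have "\<dots> = 1" using \<open>x\<in>S\<close> unfolding S_def by simp
    finally show "norm x \<le> 1" .
  qed
  ultimately have cS: "compact S" by (simp add: compact_eq_bounded_closed)
  obtain i0 :: 'n where True by simp
  have "axis i0 1 \<in> S" unfolding S_def by (simp add: axis_def)
  hence ne: "S \<noteq> {}" by auto
  have cont: "continuous_on S (qf P)"
    unfolding qf_expand[abs_def] by (intro continuous_intros)
  obtain x0 where x0: "x0 \<in> S" "\<And>y. y \<in> S \<Longrightarrow> qf P x0 \<le> qf P y"
    using continuous_attains_inf[OF cS ne cont] by blast
  have "x0 \<noteq> 0" using x0(1) unfolding S_def by auto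
  moreover have "nonneg_vec x0" using x0(1) unfolding S_def nonneg_vec_def by auto
  ultimately have m: "0 < qf P x0" using pos by blast
  define m where "m = qf P x0"
  have PC: "P \<in> COP"
  proof -
    have "0 \<le> qf P x" if "nonneg_vec x" for x
    proof (cases "x = 0")
      case True thus ?thesis by (simp add: qf_zero)
    next
      case False thus ?thesis using pos[OF that] by (simp add: less_imp_le)
    qed
    thus ?thesis unfolding COP_def using sym by auto
  qed
  have "\<forall>Q. sym_mat Q \<and> dist Q P < m \<longrightarrow> Q \<in> COP"
  proof (intro allI impI)
    fix Q assume Q: "sym_mat Q \<and> dist Q P < m"
    have "0 \<le> qf Q x" if nx: "nonneg_vec x" for x
    proof (cases "x = 0")
      case True thus ?thesis by (simp add: qf_zero)
    next
      case False
      define \<sigma> where "\<sigma> = (\<Sum>i\<in>UNIV. x$i)"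
      have xi: "\<And>i. 0 \<le> x$i" using nx unfolding nonneg_vec_def by auto
      obtain j where "x$j \<noteq> 0" using False by (metis vec_eq_iff zero_index)
      hence "0 < x$j" using xi[of j] by simp
      hence sp: "0 < \<sigma>" unfolding \<sigma>_def using xi by (intro sum_pos2[of UNIV j]) auto
      define z where "z = (1/\<sigma>) *\<^sub>R x"
      have zS: "z \<in> S" unfolding S_def z_def using sp xi
        by (auto simp: sum_divide_distrib[symmetric] \<sigma>_def)
      hence nz: "nonneg_vec z" unfolding S_def nonneg_vec_def by auto
      have "qf Q z = qf P z + qf (Q - P) z" by (simp add: qf_diff_mat)
      moreover have "\<bar>qf (Q - P) z\<bar> \<le> norm (Q - P)"
        using qf_bound[OF nz, of "Q - P"] zS unfolding S_def by simp
      moreover have "norm (Q - P) < m" using Q by (simp add: dist_norm)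
      moreover have "m \<le> qf P z" using x0(2)[OF zS] unfolding m_def .
      ultimately have "0 < qf Q z" by linarith
      moreover have "x = \<sigma> *\<^sub>R z" unfolding z_def using sp by simp
      ultimately show ?thesis by (simp add: qf_scale)
    qed
    thus "Q \<in> COP" unfolding COP_def using Q by auto
  qed
  thus ?thesis unfolding strictly_copositive_def using PC m m_def by auto
qed

definition lc :: "(nat \<Rightarrow> 'n::finite) \<Rightarrow> (nat \<Rightarrow> real) \<Rightarrow> nat \<Rightarrow> real^'n" where
  "lc \<iota> c N = (\<chi> i. \<Sum>m<N. if \<iota> m = i then c m else 0)"


lemma qf_lc: "qf Q (lc \<iota> c N) = (\<Sum>m<N. \<Sum>m'<N. c m * c m' * Q $ \<iota> m $ \<iota> m')"
proof -
  have "qf Q (lc \<iota> c N) = (\<Sum>i\<in>UNIV. \<Sum>j\<in>UNIV. \<Sum>m<N. \<Sum>m'<N.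
      (if \<iota> m = i then c m else 0) * (if \<iota> m' = j then c m' else 0) * Q$i$j)"
    unfolding qf_expand lc_def by (simp add: sum_distrib_left sum_distrib_right algebra_simps)
  also have "\<dots> = (\<Sum>i\<in>UNIV. \<Sum>m<N. \<Sum>j\<in>UNIV. \<Sum>m'<N.
      (if \<iota> m = i then c m else 0) * (if \<iota> m' = j then c m' else 0) * Q$i$j)"
    by (rule sum.cong[OF refl]) (rule sum.swap)
  also have "\<dots> = (\<Sum>i\<in>UNIV. \<Sum>m<N. \<Sum>m'<N. \<Sum>j\<in>UNIV.
      (if \<iota> m = i then c m else 0) * (if \<iota> m' = j then c m' else 0) * Q$i$j)"
    by (rule sum.cong[OF refl], rule sum.cong[OF refl], rule sum.swap)
  also have "\<dots> = (\<Sum>m<N. \<Sum>i\<in>UNIV. \<Sum>m'<N. \<Sum>j\<in>UNIV.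
      (if \<iota> m = i then c m else 0) * (if \<iota> m' = j then c m' else 0) * Q$i$j)"
    by (rule sum.swap)
  also have "\<dots> = (\<Sum>m<N. \<Sum>m'<N. \<Sum>i\<in>UNIV. \<Sum>j\<in>UNIV.
      (if \<iota> m = i then c m else 0) * (if \<iota> m' = j then c m' else 0) * Q$i$j)"
    by (rule sum.cong[OF refl], rule sum.swap)
  also have "\<dots> = (\<Sum>m<N. \<Sum>m'<N. c m * c m' * Q $ \<iota> m $ \<iota> m')"
  proof (rule sum.cong[OF refl], rule sum.cong[OF refl])
    fix m m'
    have "(\<Sum>i\<in>UNIV. \<Sum>j\<in>UNIV. (if \<iota> m = i then c m else 0) * (if \<iota> m' = j then c m' else 0) * Q$i$j)
        = (\<Sum>i\<in>UNIV. (if \<iota> m = i then c m * c m' * Q$i$(\<iota> m') else 0))"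
      proof (rule sum.cong[OF refl])
        fix i
        show "(\<Sum>j\<in>UNIV. (if \<iota> m = i then c m else 0) * (if \<iota> m' = j then c m' else 0) * Q$i$j)
          = (if \<iota> m = i then c m * c m' * Q$i$(\<iota> m') else 0)"
        proof (cases "\<iota> m = i")
          case True
          have "(\<Sum>j\<in>UNIV. (if \<iota> m = i then c m else 0) * (if \<iota> m' = j then c m' else 0) * Q$i$j)
             = (\<Sum>j\<in>UNIV. if \<iota> m' = j then c m * c m' * Q$i$j else 0)"
            using True by (intro sum.cong) auto
          also have "\<dots> = c m * c m' * Q$i$(\<iota> m')" by (simp add: sum.delta)
          finally show ?thesis using True by simp
        qed simp
      qed
    also have "\<dots> = c m * c m' * Q $ \<iota> m $ \<iota> m'" by simp
    finally show "(\<Sum>i\<in>UNIV. \<Sum>j\<in>UNIV. (if \<iota> m = i then c m else 0) * (if \<iota> m' = j then c m' else 0) * Q$i$j)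
        = c m * c m' * Q $ \<iota> m $ \<iota> m'" .
  qed
  finally show ?thesis .
qed

lemma sum5: "(\<Sum>i<(5::nat). f i) = f 0 + f 1 + f 2 + f 3 + (f 4 :: 'a::comm_monoid_add)"
  by (simp add: eval_nat_numeral add.assoc)

lemma less5: "(a::nat) < 5 \<longleftrightarrow> a = 0 \<or> a = 1 \<or> a = 2 \<or> a = 3 \<or> a = 4"
  by auto

definition p5L :: "real list list" where
  "p5L = [[2,-1,1,3,-4],[-1,1,-3/2,3/2,3/2],[1,-3/2,3,-7/2,9/2],[3,3/2,-7/2,5,-13/2],[-4,3/2,9/2,-13/2,9]]"
definition p5 :: "nat \<Rightarrow> nat \<Rightarrow> real" where "p5 a b = p5L!a!b"
definition gg :: "nat \<Rightarrow> real" where "gg a = [0,1,0,1,1]!a"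
definition pn :: "nat \<Rightarrow> nat \<Rightarrow> real" where
  "pn a b = (if a<5 \<and> b<5 then p5 a b else if a<5 then -gg a/2 else if b<5 then -gg b/2 else 3)"

lemma p5_sym: "a<5 \<Longrightarrow> b<5 \<Longrightarrow> p5 a b = p5 b a"
  unfolding less5 by (auto simp: p5_def p5L_def)

lemma pn_sym: "pn a b = pn b a"
  unfolding pn_def using p5_sym by auto

definition Kmat :: "int list list" where
 "Kmat = [[24, -12, 12, 36, -48], [-12, 11, -18, 17, 17], [12, -18, 36, -42, 54], [36, 17, -42, 59, -79], [-48, 17, 54, -79, 107]]"

definition bfl :: "int list \<Rightarrow> int list \<Rightarrow> int" where
 "bfl u v = sum_list (map2 (\<lambda>row ui. ui * sum_list (map2 (*) row v)) Kmat u)"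


datatype tr = Lf | Nd nat nat tr tr

fun chk :: "tr \<Rightarrow> int list list \<Rightarrow> bool" where
 "chk Lf V = (list_all (\<lambda>i. 0 < bfl (V!i) (V!i)) [0..<5] \<and>
     list_all (\<lambda>i. list_all (\<lambda>j. i = j \<or> 0 \<le> bfl (V!i) (V!j)) [0..<5]) [0..<5])"
| "chk (Nd i j t1 t2) V = (i < 5 \<and> j < 5 \<and> i \<noteq> j \<and>
     (let m = map2 (+) (V!i) (V!j) in chk t1 (V[i:=m]) \<and> chk t2 (V[j:=m])))"

definition bR :: "int list \<Rightarrow> int list \<Rightarrow> real" where
 "bR u v = (\<Sum>i<5. \<Sum>j<5. of_int (Kmat!i!j) * of_int (u!i) * of_int (v!j))"


lemma len5: "length u = 5 \<Longrightarrow> \<exists>a b c d e. u = [a,b,c,d,e]"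
  by (cases u; cases "tl u"; cases "tl (tl u)"; cases "tl (tl (tl u))"; cases "tl (tl (tl (tl u)))"; auto)

lemma bfl_eq: "length u = 5 \<Longrightarrow> length v = 5 \<Longrightarrow> real_of_int (bfl u v) = bR u v"
  apply (drule len5)+
  apply (elim exE)
  apply (simp add: bfl_def bR_def sum5 Kmat_def)
  apply (simp add: algebra_simps)
  done

definition fr :: "(nat \<Rightarrow> real) \<Rightarrow> real" where
 "fr w = (\<Sum>i<5. \<Sum>j<5. of_int (Kmat!i!j) * w i * w j)"

definition cmb :: "int list list \<Rightarrow> (nat \<Rightarrow> real) \<Rightarrow> nat \<Rightarrow> real" where
 "cmb V l c = (\<Sum>k<5. l k * of_int (V!k!c))"

lemma fr_cmb: "fr (cmb V l) = (\<Sum>k<5. \<Sum>m<5. l k * l m * bR (V!k) (V!m))"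
proof -
  let ?f = "\<lambda>i j m k. of_int (Kmat!i!j) * (l k * of_int (V!k!i)) * (l m * of_int (V!m!j))"
  have "fr (cmb V l) = (\<Sum>i<5. \<Sum>j<5. \<Sum>m<5. \<Sum>k<5. ?f i j m k)"
    unfolding fr_def cmb_def by (simp add: sum_distrib_left sum_distrib_right mult.assoc)
  also have "\<dots> = (\<Sum>i<5. \<Sum>m<5. \<Sum>j<5. \<Sum>k<5. ?f i j m k)"
    by (rule sum.cong[OF refl], rule sum.swap)
  also have "\<dots> = (\<Sum>i<5. \<Sum>m<5. \<Sum>k<5. \<Sum>j<5. ?f i j m k)"
    by (rule sum.cong[OF refl], rule sum.cong[OF refl], rule sum.swap)
  also have "\<dots> = (\<Sum>m<5. \<Sum>i<5. \<Sum>k<5. \<Sum>j<5. ?f i j m k)"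
    by (rule sum.swap)
  also have "\<dots> = (\<Sum>m<5. \<Sum>k<5. \<Sum>i<5. \<Sum>j<5. ?f i j m k)"
    by (rule sum.cong[OF refl], rule sum.swap)
  also have "\<dots> = (\<Sum>k<5. \<Sum>m<5. \<Sum>i<5. \<Sum>j<5. ?f i j m k)"
    by (rule sum.swap)
  also have "\<dots> = (\<Sum>k<5. \<Sum>m<5. l k * l m * bR (V!k) (V!m))"
    unfolding bR_def by (simp add: sum_distrib_left algebra_simps)
  finally show ?thesis .
qed


lemma leaf_pos:
  assumes diag: "\<And>k. k<5 \<Longrightarrow> 0 < bR (V!k) (V!k)"
    and off: "\<And>k m. k<5 \<Longrightarrow> m<5 \<Longrightarrow> k\<noteq>m \<Longrightarrow> 0 \<le> bR (V!k) (V!m)"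
    and nn: "\<And>k. k<5 \<Longrightarrow> 0 \<le> l k" and nz: "k0 < 5" "l k0 \<noteq> 0"
  shows "0 < fr (cmb V l)"
proof -
  have row: "l k * l k * bR (V!k) (V!k) \<le> (\<Sum>m<5. l k * l m * bR (V!k) (V!m))" if "k<5" for k
  proof -
    have "(\<Sum>m<5. l k * l m * bR (V!k) (V!m)) = l k * l k * bR (V!k) (V!k) + (\<Sum>m\<in>{..<5}-{k}. l k * l m * bR (V!k) (V!m))"
      using that by (subst sum.remove[of _ k]) auto
    moreover have "0 \<le> (\<Sum>m\<in>{..<5}-{k}. l k * l m * bR (V!k) (V!m))"
      by (rule sum_nonneg) (use that nn off in \<open>auto intro!: mult_nonneg_nonneg\<close>)
    ultimately show ?thesis by linarith
  qed
  have "0 < (\<Sum>k<5. l k * l k * bR (V!k) (V!k))"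
  proof (rule sum_pos2[of _ k0])
    have "0 < l k0 * l k0" using nz(2) not_real_square_gt_zero by blast
    thus "0 < l k0 * l k0 * bR (V!k0) (V!k0)" using nz diag[of k0] by simp
  next
    fix i assume "i \<in> {..<5::nat}"
    hence "0 \<le> bR (V!i) (V!i)" using diag[of i] by simp
    thus "0 \<le> l i * l i * bR (V!i) (V!i)" by (simp add: mult_nonneg_nonneg)
  qed (use nz in auto)
  also have "\<dots> \<le> (\<Sum>k<5. \<Sum>m<5. l k * l m * bR (V!k) (V!m))"
    by (rule sum_mono) (use row in auto)
  finally show ?thesis by (simp add: fr_cmb)
qed

lemma fr_cong: "(\<And>c. c < 5 \<Longrightarrow> w c = w' c) \<Longrightarrow> fr w = fr w'"
  unfolding fr_def by (intro sum.cong refl) auto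

lemma sum_two: "finite S \<Longrightarrow> i \<in> S \<Longrightarrow> j \<in> S \<Longrightarrow> i \<noteq> j \<Longrightarrow> sum f S = f i + f j + sum f (S - {i,j})"
proof -
  assume a: "finite S" "i \<in> S" "j \<in> S" "i \<noteq> j"
  have "sum f S = f i + sum f (S - {i})" using a by (simp add: sum.remove)
  also have "sum f (S - {i}) = f j + sum f (S - {i} - {j})" using a by (intro sum.remove) auto
  also have "S - {i} - {j} = S - {i,j}" by auto
  finally show ?thesis by (simp add: add.assoc)
qed

definition wfV :: "int list list \<Rightarrow> bool" where
  "wfV V = (length V = 5 \<and> (\<forall>k<5. length (V!k) = 5))"

lemma cmb_split:
  assumes wf: "wfV V" and ij: "i<5" "j<5" "i\<noteq>j" and c: "c<5"
  shows "cmb (V[j := map2 (+) (V!i) (V!j)]) (l(i := l i - l j)) c = cmb V l c"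
proof -
  let ?V2 = "V[j := map2 (+) (V!i) (V!j)]" and ?l2 = "l(i := l i - l j)"
  have L: "length (V!i) = 5" "length (V!j) = 5" "length V = 5" using wf ij unfolding wfV_def by auto
  have "cmb ?V2 ?l2 c = ?l2 i * of_int (?V2!i!c) + ?l2 j * of_int (?V2!j!c) + (\<Sum>k\<in>{..<5}-{i,j}. ?l2 k * of_int (?V2!k!c))"
    unfolding cmb_def using ij by (subst sum_two[of _ i j]) auto
  also have "\<dots> = l i * of_int (V!i!c) + l j * of_int (V!j!c) + (\<Sum>k\<in>{..<5}-{i,j}. l k * of_int (V!k!c))"
  proof -
    have a: "?l2 i * of_int (?V2!i!c) = (l i - l j) * of_int (V!i!c)" using ij L by simp
    have b: "?l2 j * of_int (?V2!j!c) = l j * (of_int (V!i!c) + of_int (V!j!c))" using ij L c by simp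
    have s: "(\<Sum>k\<in>{..<5}-{i,j}. ?l2 k * of_int (?V2!k!c)) = (\<Sum>k\<in>{..<5}-{i,j}. l k * of_int (V!k!c))"
      by (rule sum.cong) auto
    show ?thesis unfolding a b s by (simp add: algebra_simps)
  qed
  also have "\<dots> = cmb V l c"
    unfolding cmb_def using ij by (subst sum_two[of _ i j]) auto
  finally show ?thesis .
qed

lemma wf_upd: "wfV V \<Longrightarrow> i<5 \<Longrightarrow> j<5 \<Longrightarrow> wfV (V[j := map2 (+) (V!i) (V!j)])"
  unfolding wfV_def by (simp add: nth_list_update)

lemma chk_sound:
  "chk t V \<Longrightarrow> wfV V \<Longrightarrow> (\<And>k. k<5 \<Longrightarrow> 0 \<le> l k) \<Longrightarrow> k0 < 5 \<Longrightarrow> l k0 \<noteq> 0 \<Longrightarrow> 0 < fr (cmb V l)"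
proof (induction t V arbitrary: l k0 rule: chk.induct)
  case (1 V)
  have len: "\<And>k. k<5 \<Longrightarrow> length (V!k) = 5" using "1.prems"(2) unfolding wfV_def by auto
  show ?case
  proof (rule leaf_pos[of V l k0])
    fix k :: nat assume "k<5"
    hence "0 < bfl (V!k) (V!k)" using "1.prems"(1) by (auto simp: list_all_iff)
    thus "0 < bR (V!k) (V!k)" using bfl_eq[OF len len, of k k] \<open>k<5\<close> by simp
  next
    fix k m :: nat assume "k<5" "m<5" "k\<noteq>m"
    have km: "k \<in> {0..<5}" "m \<in> {0..<5}" using \<open>k<5\<close> \<open>m<5\<close> by auto
    have "list_all (\<lambda>i. list_all (\<lambda>j. i = j \<or> 0 \<le> bfl (V!i) (V!j)) [0..<5]) [0..<5]" using "1.prems"(1) by simp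
    hence "\<forall>i\<in>{0..<5}. \<forall>j\<in>{0..<5}. i = j \<or> 0 \<le> bfl (V!i) (V!j)" unfolding list_all_iff by simp
    hence "k = m \<or> 0 \<le> bfl (V!k) (V!m)" using km by blast
    hence "0 \<le> bfl (V!k) (V!m)" using \<open>k\<noteq>m\<close> by blast
    thus "0 \<le> bR (V!k) (V!m)" using bfl_eq[OF len len, of k m] \<open>k<5\<close> \<open>m<5\<close> by simp
  qed (use "1.prems" in auto)
next
  case (2 i j t1 t2 V)
  note wf = "2.prems"(2) and nn = "2.prems"(3) and k0 = "2.prems"(4,5)
  have ij: "i<5" "j<5" "i\<noteq>j" using "2.prems"(1) by auto
  let ?m = "map2 (+) (V!i) (V!j)"
  have c1: "chk t1 (V[i:=?m])" and c2: "chk t2 (V[j:=?m])" using "2.prems"(1) by (auto simp: Let_def)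
  have wf2: "wfV (V[j:=?m])" by (rule wf_upd[OF wf ij(1,2)])
  have m': "map2 (+) (V!j) (V!i) = ?m" by (rule nth_equalityI) (auto simp: add.commute)
  have wf1: "wfV (V[i:=?m])" using wf_upd[OF wf ij(2,1)] unfolding m' .
  show ?case
  proof (cases "l j \<le> l i")
    case True
    let ?l = "l(i := l i - l j)"
    have nn2: "\<And>k. k<5 \<Longrightarrow> 0 \<le> ?l k" using nn True by simp
    have "\<exists>k1<5. ?l k1 \<noteq> 0"
    proof (cases "l j = 0")
      case True
      with k0 have "k0 \<noteq> j" by auto
      show ?thesis
      proof (cases "k0 = i")
        case True
        hence "?l k0 = l i - l j" by simp
        hence "?l k0 \<noteq> 0" using k0 \<open>l j = 0\<close> True by simp
        thus ?thesis using k0(1) by blast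
      next
        case False
        hence "?l k0 = l k0" by simp
        thus ?thesis using k0 by auto
      qed
    next
      case False
      hence "?l j \<noteq> 0" using ij(3) by simp
      thus ?thesis using ij(2) by blast
    qed
    then obtain k1 where k1: "k1 < 5" "?l k1 \<noteq> 0" by blast
    have "0 < fr (cmb (V[j:=?m]) ?l)"
      by (rule "2.IH"(2)[OF refl c2 wf2, of ?l k1, OF nn2 k1])
    moreover have "fr (cmb (V[j:=?m]) ?l) = fr (cmb V l)"
      by (rule fr_cong) (rule cmb_split[OF wf ij])
    ultimately show ?thesis by simp
  next
    case False
    have ji: "j<5" "i<5" "j\<noteq>i" using ij by auto
    let ?l = "l(j := l j - l i)"
    have nn2: "\<And>k. k<5 \<Longrightarrow> 0 \<le> ?l k" using nn False by simp
    have "?l j \<noteq> 0" using False by simp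
    hence "\<exists>k1<5. ?l k1 \<noteq> 0" using ij(2) by blast
    then obtain k1 where k1: "k1 < 5" "?l k1 \<noteq> 0" by blast
    have "0 < fr (cmb (V[i:=?m]) ?l)"
      by (rule "2.IH"(1)[OF refl c1 wf1, of ?l k1, OF nn2 k1])
    moreover have "fr (cmb (V[i:=?m]) ?l) = fr (cmb V l)"
      by (rule fr_cong) (rule cmb_split[OF wf ji, unfolded m'])
    ultimately show ?thesis by simp
  qed
qed

definition Etree :: tr where "Etree = (Nd 3 4 (Nd 0 4 (Nd 1 2 Lf (Nd 1 2 Lf Lf)) (Nd 0 4 (Nd 1 2 Lf (Nd 0 1 (Nd 1 2 Lf Lf) Lf)) (Nd 1 2 (Nd 0 3 (Nd 0 3 Lf Lf) Lf) (Nd 0 1 (Nd 0 2 (Nd 0 1 (Nd 1 2 (Nd 0 2 Lf Lf) (Nd 1 4 Lf Lf)) (Nd 1 2 Lf Lf)) (Nd 1 2 (Nd 0 4 Lf Lf) (Nd 0 4 (Nd 0 1 (Nd 1 4 (Nd 0 4 Lf Lf) Lf) (Nd 1 4 Lf Lf)) (Nd 1 4 Lf (Nd 0 1 Lf Lf))))) (Nd 0 3 (Nd 1 2 (Nd 0 3 Lf Lf) (Nd 1 4 (Nd 0 3 Lf Lf) (Nd 0 3 Lf Lf))) (Nd 1 2 Lf (Nd 1 4 Lf Lf))))))) (Nd 2 3 (Nd 3 4 (Nd 0 1 (Nd 3 4 (Nd 2 4 (Nd 3 4 (Nd 2 3 (Nd 0 1 Lf Lf) (Nd 0 1 Lf Lf))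 (Nd 2 3 (Nd 0 1 Lf Lf) (Nd 2 4 (Nd 0 1 Lf Lf) (Nd 0 1 Lf Lf)))) (Nd 3 4 (Nd 0 1 (Nd 1 2 Lf Lf) Lf) (Nd 0 1 (Nd 1 2 Lf Lf) Lf))) (Nd 0 1 (Nd 1 2 Lf Lf) Lf)) (Nd 0 4 (Nd 3 4 (Nd 2 4 (Nd 0 4 (Nd 3 4 (Nd 2 3 Lf Lf) (Nd 2 3 Lf (Nd 2 4 Lf Lf))) (Nd 2 3 Lf Lf)) (Nd 3 4 Lf Lf)) Lf) Lf)) (Nd 0 1 (Nd 0 1 (Nd 1 2 Lf Lf) Lf) Lf)) (Nd 1 2 (Nd 0 4 (Nd 3 4 (Nd 0 4 Lf Lf) (Nd 1 3 (Nd 2 3 Lf Lf) Lf)) (Nd 1 3 (Nd 2 3 Lf Lf) Lf)) (Nd 0 1 (Nd 3 4 (Nd 0 2 (Nd 0 1 (Nd 1 2 (Nd 0 2 Lf Lf) Lf) (Nd 1 2 Lf Lf)) (Nd 1 2 Lf (Nd 0 1 Lf Lf))) (Nd 0 2 (Nd 0 1 (Nd 1 2 (Nd 1 3 (Nd 2 3 Lf (Nd 0 2 (Nd 1 2 Lf Lf) Lf)) (Nd 0 2 (Nd 2 3 Lf Lf) Lf)) (Nd 2 3 (Nd 1 3 Lf Lf) Lf)) (Nd 2 3 Lf (Nd 1 2 Lf Lf))) (Nd 1 2 Lf (Nd 0 1 (Nd 1 3 Lf Lf) Lf)))) (Nd 0 4 (Nd 3 4 (Nd 1 2 (Nd 0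 4 Lf Lf) (Nd 0 4 Lf Lf)) (Nd 1 2 (Nd 2 3 Lf Lf) Lf)) (Nd 1 2 (Nd 2 3 Lf Lf) Lf))))))"

definition E5 :: "int list list" where "E5 = [[1,0,0,0,0],[0,1,0,0,0],[0,0,1,0,0],[0,0,0,1,0],[0,0,0,0,1]]"

lemma chk_E: "chk Etree E5"
  unfolding Etree_def E5_def by code_simp

lemma fr_eq: "fr y = 12*(\<Sum>a<5. \<Sum>b<5. p5 a b * y a * y b) - (\<Sum>a<5. gg a * y a)^2"
  unfolding fr_def by (simp add: sum5 Kmat_def p5_def p5L_def gg_def power2_eq_square algebra_simps)

lemma cert_pos: "(\<And>a. a<5 \<Longrightarrow> 0 \<le> y a) \<Longrightarrow> a0<5 \<Longrightarrow> y a0 \<noteq> 0 \<Longrightarrow> 0 < fr y"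
proof -
  assume nn: "\<And>a. a<5 \<Longrightarrow> 0 \<le> y a" and a0: "a0<5" "y a0 \<noteq> 0"
  have wf: "wfV E5" unfolding wfV_def E5_def by (simp add: less5)
  have "0 < fr (cmb E5 y)" by (rule chk_sound[OF chk_E wf, of y a0]) (use nn a0 in auto)
  moreover have "fr (cmb E5 y) = fr y"
    by (rule fr_cong) (auto simp: cmb_def E5_def sum5 less5)
  ultimately show ?thesis by simp
qed

lemma int_pos_ge1: "z \<in> \<int> \<Longrightarrow> 0 < z \<Longrightarrow> 1 \<le> (z::real)"
proof -
  assume "z \<in> \<int>" "0 < z"
  then obtain k where k: "z = of_int k" by (auto elim: Ints_cases)
  hence "0 < k" using \<open>0 < z\<close> by simp
  hence "1 \<le> k" by simp
  thus ?thesis using k by simp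
qed

lemma bq_eq: "(\<Sum>a<5. \<Sum>b<5. p5 a b * y a * y b) =
   2*y 0^2 + y 1^2 + 3*y 2^2 + 5*y 3^2 + 9*y 4^2 - 2*y 0*y 1 + 2*y 0*y 2 + 6*y 0*y 3 - 8*y 0*y 4
   - 3*y 1*y 2 + 3*y 1*y 3 + 3*y 1*y 4 - 7*y 2*y 3 + 9*y 2*y 4 - 13*y 3*y 4"
  by (simp add: sum5 p5_def p5L_def power2_eq_square algebra_simps)

lemma gy_eq: "(\<Sum>a<5. gg a * y a) = y 1 + y 3 + y 4"
  by (simp add: sum5 gg_def)

lemma lc_int: "(\<And>m. m<N \<Longrightarrow> c m \<in> \<int>) \<Longrightarrow> int_vec (lc \<iota> c N)"
  unfolding int_vec_def lc_def by (auto intro!: Ints_sum)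

lemma lc_nonneg: "(\<And>m. m<N \<Longrightarrow> 0 \<le> c m) \<Longrightarrow> nonneg_vec (lc \<iota> c N)"
  unfolding nonneg_vec_def lc_def by (auto intro!: sum_nonneg)


lemma sum6: "(\<Sum>i<(6::nat). f i) = f 0 + f 1 + f 2 + f 3 + f 4 + (f 5 :: 'a::comm_monoid_add)"
  by (simp add: eval_nat_numeral add.assoc)

lemma sum7: "(\<Sum>i<(7::nat). f i) = f 0 + f 1 + f 2 + f 3 + f 4 + f 5 + (f 6 :: 'a::comm_monoid_add)"
  by (simp add: eval_nat_numeral add.assoc)

lemma less6: "(a::nat) < 6 \<longleftrightarrow> a = 0 \<or> a = 1 \<or> a = 2 \<or> a = 3 \<or> a = 4 \<or> a = 5"
  by auto

lemma less7: "(a::nat) < 7 \<longleftrightarrow> a = 0 \<or> a = 1 \<or> a = 2 \<or> a = 3 \<or> a = 4 \<or> a = 5 \<or> a = 6"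
  by auto

locale cons5 =
  fixes \<alpha> :: "nat \<Rightarrow> 'n::finite"
  assumes inj: "inj_on \<alpha> {..<5}"
begin

definition AA :: "'n set" where "AA = \<alpha> ` {..<5}"
definition TT :: "'n set" where "TT = UNIV - AA"

definition bi :: "'n \<Rightarrow> nat" where
  "bi i = (if i \<in> AA then the_inv_into {..<5} \<alpha> i else 5)"

lemma bi_a: "a<5 \<Longrightarrow> bi (\<alpha> a) = a"
  unfolding bi_def AA_def using inj by (auto simp: the_inv_into_f_f)

lemma bi_T: "t \<in> TT \<Longrightarrow> bi t = 5"
  unfolding bi_def TT_def by auto

definition PP :: "real^'n^'n" where "PP = (\<chi> i j. pn (bi i) (bi j))"

lemma PP_sym: "sym_mat PP"
  unfolding sym_mat_def PP_def transpose_def by (simp add: pn_sym)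

lemma sum_split: "sum f UNIV = (\<Sum>a<5. f (\<alpha> a)) + sum f TT"
proof -
  have "UNIV = AA \<union> TT" "AA \<inter> TT = {}" unfolding TT_def by auto
  hence "sum f UNIV = sum f AA + sum f TT" by (metis finite sum.union_disjoint)
  moreover have "sum f AA = (\<Sum>a<5. f (\<alpha> a))" unfolding AA_def using inj by (simp add: sum.reindex)
  ultimately show ?thesis by simp
qed

lemma qf_PP: "qf PP x = (\<Sum>a<5. \<Sum>b<5. p5 a b * x$\<alpha> a * x$\<alpha> b)
     - (\<Sum>t\<in>TT. x$t) * (\<Sum>a<5. gg a * x$\<alpha> a) + 3 * (\<Sum>t\<in>TT. x$t)^2"
proof -
  let ?F = "\<lambda>i j. PP$i$j * x$i * x$j"
  have "qf PP x = (\<Sum>i\<in>UNIV. \<Sum>j\<in>UNIV. ?F i j)" by (rule qf_expand)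
  also have "\<dots> = (\<Sum>a<5. \<Sum>b<5. ?F (\<alpha> a) (\<alpha> b)) + (\<Sum>a<5. \<Sum>t\<in>TT. ?F (\<alpha> a) t)
      + ((\<Sum>t\<in>TT. \<Sum>b<5. ?F t (\<alpha> b)) + (\<Sum>t\<in>TT. \<Sum>u\<in>TT. ?F t u))"
  proof -
    have "(\<Sum>i\<in>UNIV. \<Sum>j\<in>UNIV. ?F i j) = (\<Sum>i\<in>UNIV. (\<Sum>b<5. ?F i (\<alpha> b)) + (\<Sum>t\<in>TT. ?F i t))"
      by (rule sum.cong[OF refl]) (rule sum_split)
    also have "\<dots> = (\<Sum>i\<in>UNIV. \<Sum>b<5. ?F i (\<alpha> b)) + (\<Sum>i\<in>UNIV. \<Sum>t\<in>TT. ?F i t)"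
      by (rule sum.distrib)
    also have "(\<Sum>i\<in>UNIV. \<Sum>b<5. ?F i (\<alpha> b)) = (\<Sum>a<5. \<Sum>b<5. ?F (\<alpha> a) (\<alpha> b)) + (\<Sum>t\<in>TT. \<Sum>b<5. ?F t (\<alpha> b))"
      by (rule sum_split)
    also have "(\<Sum>i\<in>UNIV. \<Sum>t\<in>TT. ?F i t) = (\<Sum>a<5. \<Sum>t\<in>TT. ?F (\<alpha> a) t) + (\<Sum>t\<in>TT. \<Sum>u\<in>TT. ?F t u)"
      by (rule sum_split)
    finally show ?thesis by (simp add: algebra_simps)
  qed
  also have "(\<Sum>a<5. \<Sum>b<5. ?F (\<alpha> a) (\<alpha> b)) = (\<Sum>a<5. \<Sum>b<5. p5 a b * x$\<alpha> a * x$\<alpha> b)"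
    by (intro sum.cong refl) (simp add: PP_def bi_a pn_def)
  also have "(\<Sum>a<5. \<Sum>t\<in>TT. ?F (\<alpha> a) t) = (\<Sum>a<5. \<Sum>t\<in>TT. -(gg a/2) * x$\<alpha> a * x$t)"
    by (intro sum.cong refl) (simp add: PP_def bi_a bi_T pn_def)
  also have "\<dots> = -(1/2) * (\<Sum>t\<in>TT. x$t) * (\<Sum>a<5. gg a * x$\<alpha> a)"
    by (simp add: sum_distrib_left sum_distrib_right sum_negf sum_divide_distrib[symmetric] algebra_simps)
  also have "(\<Sum>t\<in>TT. \<Sum>b<5. ?F t (\<alpha> b)) = (\<Sum>t\<in>TT. \<Sum>b<5. -(gg b/2) * x$\<alpha> b * x$t)"
    by (intro sum.cong refl) (simp add: PP_def bi_a bi_T pn_def)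
  also have "\<dots> = (\<Sum>b<5. \<Sum>t\<in>TT. -(gg b/2) * x$\<alpha> b * x$t)" by (rule sum.swap)
  also have "\<dots> = -(1/2) * (\<Sum>t\<in>TT. x$t) * (\<Sum>a<5. gg a * x$\<alpha> a)"
    by (simp add: sum_distrib_left sum_distrib_right sum_negf sum_divide_distrib[symmetric] algebra_simps)
  also have "(\<Sum>t\<in>TT. \<Sum>u\<in>TT. ?F t u) = (\<Sum>t\<in>TT. \<Sum>u\<in>TT. 3 * x$t * x$u)"
    by (intro sum.cong refl) (simp add: PP_def bi_T pn_def)
  also have "\<dots> = 3 * (\<Sum>t\<in>TT. x$t)^2"
    by (simp add: power2_eq_square sum_distrib_left sum_distrib_right algebra_simps)
  finally show ?thesis by simp
qed

lemma qf_PP_pos: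
  assumes nx: "nonneg_vec x" and x0: "x \<noteq> 0"
  shows "0 < qf PP x"
proof -
  define y where "y a = x$\<alpha> a" for a
  define s where "s = (\<Sum>t\<in>TT. x$t)"
  define gy where "gy = (\<Sum>a<5. gg a * y a)"
  have xi: "\<And>i. 0 \<le> x$i" using nx unfolding nonneg_vec_def by auto
  have q: "qf PP x = fr y / 12 + 3 * (s - gy/6)^2"
    unfolding qf_PP fr_eq y_def[symmetric] s_def[symmetric] gy_def[symmetric]
    by (simp add: power2_eq_square field_simps y_def)
  show ?thesis
  proof (cases "\<exists>a<5. y a \<noteq> 0")
    case True
    then obtain a0 where "a0<5" "y a0 \<noteq> 0" by blast
    hence "0 < fr y" by (intro cert_pos) (auto simp: y_def xi)
    thus ?thesis unfolding q by (simp add: add_pos_nonneg)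
  next
    case False
    hence y0: "\<And>a. a<5 \<Longrightarrow> y a = 0" by auto
    have "fr y = 0" unfolding fr_def by (simp add: y0)
    moreover have "gy = 0" unfolding gy_def by (simp add: y0)
    moreover have "0 < s"
    proof -
      obtain i where i: "x$i \<noteq> 0" using x0 by (metis vec_eq_iff zero_index)
      have "i \<notin> AA" using i False unfolding AA_def y_def by auto
      hence "i \<in> TT" unfolding TT_def by auto
      moreover have "0 < x$i" using i xi[of i] by simp
      ultimately show ?thesis unfolding s_def using xi by (intro sum_pos2[of TT i]) auto
    qed
    ultimately show ?thesis unfolding q by simp
  qed
qed

lemma PP_strict: "strictly_copositive PP"
  by (rule strictly_copositive_from_pos[OF PP_sym qf_PP_pos])

lemma PP_int: "int_vec x \<Longrightarrow> qf PP x \<in> \<int>"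
proof -
  assume "int_vec x"
  hence xi: "\<And>i. x$i \<in> \<int>" unfolding int_vec_def by auto
  have s: "(\<Sum>t\<in>TT. x$t) \<in> \<int>" using xi by (intro Ints_sum) auto
  show ?thesis unfolding qf_PP bq_eq[of "\<lambda>a. x$\<alpha> a"] gy_eq
    using xi s by (intro Ints_add Ints_diff Ints_mult Ints_power Ints_numeral) auto
qed

lemma PP_entry: "PP$i$j = pn (bi i) (bi j)" by (simp add: PP_def)

lemma minCOP_PP: "min_COP PP = 1"
proof -
  let ?S = "{qf PP v | v. int_vec v \<and> nonneg_vec v \<and> v \<noteq> 0}"
  let ?c = "\<lambda>m::nat. if m = 1 then 1 else (0::real)"
  have "lc \<alpha> ?c 5 \<noteq> 0"
  proof
    assume "lc \<alpha> ?c 5 = 0"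
    hence "(lc \<alpha> ?c 5) $ \<alpha> 1 = 0" by simp
    moreover have "(lc \<alpha> ?c 5) $ \<alpha> 1 = 1"
      unfolding lc_def using inj by (simp add: sum5 inj_on_def)
    ultimately show False by simp
  qed
  moreover have "qf PP (lc \<alpha> ?c 5) = 1"
    unfolding qf_lc by (simp add: sum5 PP_entry bi_a pn_def p5_def p5L_def)
  moreover have "int_vec (lc \<alpha> ?c 5)" "nonneg_vec (lc \<alpha> ?c 5)"
    by (intro lc_int lc_nonneg; simp)+
  ultimately have "1 \<in> ?S" by (smt (verit) mem_Collect_eq)
  moreover have "\<And>z. z \<in> ?S \<Longrightarrow> 1 \<le> z"
  proof -
    fix z assume "z \<in> ?S"
    then obtain v where v: "z = qf PP v" "int_vec v" "nonneg_vec v" "v \<noteq> 0" by blast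
    show "1 \<le> z" unfolding v(1) by (rule int_pos_ge1[OF PP_int[OF v(2)] qf_PP_pos[OF v(3,4)]])
  qed
  ultimately show ?thesis unfolding min_COP_def by (intro cInf_eq_minimum) auto
qed

lemma Min_COP_PP: "Min_COP PP = {v. int_vec v \<and> nonneg_vec v \<and> qf PP v = 1}"
  unfolding Min_COP_def minCOP_PP ..

lemma PP_unique:
  assumes sQ: "sym_mat Q" and hQ: "\<forall>v\<in>Min_COP PP. qf Q v = min_COP PP"
  shows "Q = PP"
proof -
  have hQ1: "qf Q (lc \<iota> c N) = 1" if "\<And>m. m<N \<Longrightarrow> c m \<in> \<int> \<and> 0 \<le> c m" "qf PP (lc \<iota> c N) = 1" for \<iota> c N
  proof -
    have "lc \<iota> c N \<in> Min_COP PP" unfolding Min_COP_PP using that by (auto intro!: lc_int lc_nonneg)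
    thus ?thesis using hQ minCOP_PP by auto
  qed
  have sy: "\<And>i j. Q$j$i = Q$i$j" using sQ unfolding sym_mat_def by (metis transpose_def vec_lambda_beta)
  define q00 where "q00 = Q$\<alpha> 0$\<alpha> 0"
  have s00: "Q$\<alpha> 0$\<alpha> 0 = q00" "Q$\<alpha> 0$\<alpha> 0 = q00" using sy q00_def by auto
  define q01 where "q01 = Q$\<alpha> 0$\<alpha> 1"
  have s01: "Q$\<alpha> 0$\<alpha> 1 = q01" "Q$\<alpha> 1$\<alpha> 0 = q01" using sy q01_def by auto
  define q02 where "q02 = Q$\<alpha> 0$\<alpha> 2"
  have s02: "Q$\<alpha> 0$\<alpha> 2 = q02" "Q$\<alpha> 2$\<alpha> 0 = q02" using sy q02_def by auto
  define q03 where "q03 = Q$\<alpha> 0$\<alpha> 3"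
  have s03: "Q$\<alpha> 0$\<alpha> 3 = q03" "Q$\<alpha> 3$\<alpha> 0 = q03" using sy q03_def by auto
  define q04 where "q04 = Q$\<alpha> 0$\<alpha> 4"
  have s04: "Q$\<alpha> 0$\<alpha> 4 = q04" "Q$\<alpha> 4$\<alpha> 0 = q04" using sy q04_def by auto
  define q11 where "q11 = Q$\<alpha> 1$\<alpha> 1"
  have s11: "Q$\<alpha> 1$\<alpha> 1 = q11" "Q$\<alpha> 1$\<alpha> 1 = q11" using sy q11_def by auto
  define q12 where "q12 = Q$\<alpha> 1$\<alpha> 2"
  have s12: "Q$\<alpha> 1$\<alpha> 2 = q12" "Q$\<alpha> 2$\<alpha> 1 = q12" using sy q12_def by auto
  define q13 where "q13 = Q$\<alpha> 1$\<alpha> 3"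
  have s13: "Q$\<alpha> 1$\<alpha> 3 = q13" "Q$\<alpha> 3$\<alpha> 1 = q13" using sy q13_def by auto
  define q14 where "q14 = Q$\<alpha> 1$\<alpha> 4"
  have s14: "Q$\<alpha> 1$\<alpha> 4 = q14" "Q$\<alpha> 4$\<alpha> 1 = q14" using sy q14_def by auto
  define q22 where "q22 = Q$\<alpha> 2$\<alpha> 2"
  have s22: "Q$\<alpha> 2$\<alpha> 2 = q22" "Q$\<alpha> 2$\<alpha> 2 = q22" using sy q22_def by auto
  define q23 where "q23 = Q$\<alpha> 2$\<alpha> 3"
  have s23: "Q$\<alpha> 2$\<alpha> 3 = q23" "Q$\<alpha> 3$\<alpha> 2 = q23" using sy q23_def by auto
  define q24 where "q24 = Q$\<alpha> 2$\<alpha> 4"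
  have s24: "Q$\<alpha> 2$\<alpha> 4 = q24" "Q$\<alpha> 4$\<alpha> 2 = q24" using sy q24_def by auto
  define q33 where "q33 = Q$\<alpha> 3$\<alpha> 3"
  have s33: "Q$\<alpha> 3$\<alpha> 3 = q33" "Q$\<alpha> 3$\<alpha> 3 = q33" using sy q33_def by auto
  define q34 where "q34 = Q$\<alpha> 3$\<alpha> 4"
  have s34: "Q$\<alpha> 3$\<alpha> 4 = q34" "Q$\<alpha> 4$\<alpha> 3 = q34" using sy q34_def by auto
  define q44 where "q44 = Q$\<alpha> 4$\<alpha> 4"
  have s44: "Q$\<alpha> 4$\<alpha> 4 = q44" "Q$\<alpha> 4$\<alpha> 4 = q44" using sy q44_def by auto
  have e0: "qf Q (lc \<alpha> (\<lambda>m. [0,1,0,0,0]!m) 5) = 1"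
    by (rule hQ1) (auto simp: less5 qf_lc sum5 PP_entry bi_a pn_def p5_def p5L_def)
  note e0 = e0[unfolded qf_lc sum5 s00 s01 s02 s03 s04 s11 s12 s13 s14 s22 s23 s24 s33 s34 s44, simplified]
  have e1: "qf Q (lc \<alpha> (\<lambda>m. [0,0,0,1,1]!m) 5) = 1"
    by (rule hQ1) (auto simp: less5 qf_lc sum5 PP_entry bi_a pn_def p5_def p5L_def)
  note e1 = e1[unfolded qf_lc sum5 s00 s01 s02 s03 s04 s11 s12 s13 s14 s22 s23 s24 s33 s34 s44, simplified]
  have e2: "qf Q (lc \<alpha> (\<lambda>m. [0,0,1,1,0]!m) 5) = 1"
    by (rule hQ1) (auto simp: less5 qf_lc sum5 PP_entry bi_a pn_def p5_def p5L_def)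
  note e2 = e2[unfolded qf_lc sum5 s00 s01 s02 s03 s04 s11 s12 s13 s14 s22 s23 s24 s33 s34 s44, simplified]
  have e3: "qf Q (lc \<alpha> (\<lambda>m. [0,1,1,0,0]!m) 5) = 1"
    by (rule hQ1) (auto simp: less5 qf_lc sum5 PP_entry bi_a pn_def p5_def p5L_def)
  note e3 = e3[unfolded qf_lc sum5 s00 s01 s02 s03 s04 s11 s12 s13 s14 s22 s23 s24 s33 s34 s44, simplified]
  have e4: "qf Q (lc \<alpha> (\<lambda>m. [1,1,0,0,0]!m) 5) = 1"
    by (rule hQ1) (auto simp: less5 qf_lc sum5 PP_entry bi_a pn_def p5_def p5L_def)
  note e4 = e4[unfolded qf_lc sum5 s00 s01 s02 s03 s04 s11 s12 s13 s14 s22 s23 s24 s33 s34 s44, simplified]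
  have e5: "qf Q (lc \<alpha> (\<lambda>m. [0,2,1,0,0]!m) 5) = 1"
    by (rule hQ1) (auto simp: less5 qf_lc sum5 PP_entry bi_a pn_def p5_def p5L_def)
  note e5 = e5[unfolded qf_lc sum5 s00 s01 s02 s03 s04 s11 s12 s13 s14 s22 s23 s24 s33 s34 s44, simplified]
  have e6: "qf Q (lc \<alpha> (\<lambda>m. [1,0,0,1,1]!m) 5) = 1"
    by (rule hQ1) (auto simp: less5 qf_lc sum5 PP_entry bi_a pn_def p5_def p5L_def)
  note e6 = e6[unfolded qf_lc sum5 s00 s01 s02 s03 s04 s11 s12 s13 s14 s22 s23 s24 s33 s34 s44, simplified]
  have e7: "qf Q (lc \<alpha> (\<lambda>m. [2,0,0,0,1]!m) 5) = 1"
    by (rule hQ1) (auto simp: less5 qf_lc sum5 PP_entry bi_a pn_def p5_def p5L_def)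
  note e7 = e7[unfolded qf_lc sum5 s00 s01 s02 s03 s04 s11 s12 s13 s14 s22 s23 s24 s33 s34 s44, simplified]
  have e8: "qf Q (lc \<alpha> (\<lambda>m. [0,0,1,2,1]!m) 5) = 1"
    by (rule hQ1) (auto simp: less5 qf_lc sum5 PP_entry bi_a pn_def p5_def p5L_def)
  note e8 = e8[unfolded qf_lc sum5 s00 s01 s02 s03 s04 s11 s12 s13 s14 s22 s23 s24 s33 s34 s44, simplified]
  have e9: "qf Q (lc \<alpha> (\<lambda>m. [0,1,2,1,0]!m) 5) = 1"
    by (rule hQ1) (auto simp: less5 qf_lc sum5 PP_entry bi_a pn_def p5_def p5L_def)
  note e9 = e9[unfolded qf_lc sum5 s00 s01 s02 s03 s04 s11 s12 s13 s14 s22 s23 s24 s33 s34 s44, simplified]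
  have e10: "qf Q (lc \<alpha> (\<lambda>m. [1,2,1,0,0]!m) 5) = 1"
    by (rule hQ1) (auto simp: less5 qf_lc sum5 PP_entry bi_a pn_def p5_def p5L_def)
  note e10 = e10[unfolded qf_lc sum5 s00 s01 s02 s03 s04 s11 s12 s13 s14 s22 s23 s24 s33 s34 s44, simplified]
  have e11: "qf Q (lc \<alpha> (\<lambda>m. [2,1,0,0,1]!m) 5) = 1"
    by (rule hQ1) (auto simp: less5 qf_lc sum5 PP_entry bi_a pn_def p5_def p5L_def)
  note e11 = e11[unfolded qf_lc sum5 s00 s01 s02 s03 s04 s11 s12 s13 s14 s22 s23 s24 s33 s34 s44, simplified]
  have e12: "qf Q (lc \<alpha> (\<lambda>m. [0,2,2,1,0]!m) 5) = 1"
    by (rule hQ1) (auto simp: less5 qf_lc sum5 PP_entry bi_a pn_def p5_def p5L_def)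
  note e12 = e12[unfolded qf_lc sum5 s00 s01 s02 s03 s04 s11 s12 s13 s14 s22 s23 s24 s33 s34 s44, simplified]
  have e13: "qf Q (lc \<alpha> (\<lambda>m. [1,3,1,0,0]!m) 5) = 1"
    by (rule hQ1) (auto simp: less5 qf_lc sum5 PP_entry bi_a pn_def p5_def p5L_def)
  note e13 = e13[unfolded qf_lc sum5 s00 s01 s02 s03 s04 s11 s12 s13 s14 s22 s23 s24 s33 s34 s44, simplified]
  have e14: "qf Q (lc \<alpha> (\<lambda>m. [3,1,0,0,1]!m) 5) = 1"
    by (rule hQ1) (auto simp: less5 qf_lc sum5 PP_entry bi_a pn_def p5_def p5L_def)
  note e14 = e14[unfolded qf_lc sum5 s00 s01 s02 s03 s04 s11 s12 s13 s14 s22 s23 s24 s33 s34 s44, simplified]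
  have a: "q11 = 1" using e0 by simp
  have b: "q12 = -3/2" "q22 = 3" using e3 e5 a by linarith+
  have c: "q00 = 2" "q01 = -1" "q02 = 1" using e4 e10 e13 a b by linarith+
  have d: "q23 = -7/2" "q33 = 5" "q13 = 3/2" using e2 e9 e12 a b by linarith+
  have e: "q04 = -4" "q14 = 3/2" "q44 = 9" using e7 e11 e14 a b c by linarith+
  have f: "q34 = -13/2" using e1 d e by linarith
  have g: "q24 = 9/2" using e8 b d e f by linarith
  have h: "q03 = 3" using e6 c d e f by linarith
  have bk0: "Q$\<alpha> 0$\<alpha> 0 = 2" "Q$\<alpha> 0$\<alpha> 1 = -1" "Q$\<alpha> 0$\<alpha> 2 = 1" "Q$\<alpha> 0$\<alpha> 3 = 3" "Q$\<alpha> 0$\<alpha> 4 = -4" "Q$\<alpha> 1$\<alpha> 0 = -1" "Q$\<alpha> 1$\<alpha> 1 = 1" "Q$\<alpha> 1$\<alpha> 2 = -3/2" "Q$\<alpha> 1$\<alpha> 3 = 3/2" "Q$\<alpha> 1$\<alpha> 4 = 3/2" "Q$\<alpha> 2$\<alpha> 0 = 1" "Q$\<alpha> 2$\<alpha> 1 = -3/2" "Q$\<alpha> 2$\<alpha> 2 = 3" "Q$\<alpha> 2$\<alpha> 3 = -7/2" "Q$\<alpha> 2$\<alpha> 4 = 9/2" "Q$\<alpha> 3$\<alpha> 0 = 3" "Q$\<alpha> 3$\<alpha> 1 = 3/2" "Q$\<alpha> 3$\<alpha> 2 = -7/2" "Q$\<alpha> 3$\<alpha> 3 = 5" "Q$\<alpha>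 3$\<alpha> 4 = -13/2" "Q$\<alpha> 4$\<alpha> 0 = -4" "Q$\<alpha> 4$\<alpha> 1 = 3/2" "Q$\<alpha> 4$\<alpha> 2 = 9/2" "Q$\<alpha> 4$\<alpha> 3 = -13/2" "Q$\<alpha> 4$\<alpha> 4 = 9"
    unfolding s00 s01 s02 s03 s04 s11 s12 s13 s14 s22 s23 s24 s33 s34 s44 using a b c d e f g h by simp_all
  have pp0: "PP$\<alpha> 0$\<alpha> 0 = 2" "PP$\<alpha> 0$\<alpha> 1 = -1" "PP$\<alpha> 0$\<alpha> 2 = 1" "PP$\<alpha> 0$\<alpha> 3 = 3" "PP$\<alpha> 0$\<alpha> 4 = -4" "PP$\<alpha> 1$\<alpha> 0 = -1" "PP$\<alpha> 1$\<alpha> 1 = 1" "PP$\<alpha> 1$\<alpha> 2 = -3/2" "PP$\<alpha> 1$\<alpha> 3 = 3/2" "PP$\<alpha> 1$\<alpha> 4 = 3/2" "PP$\<alpha> 2$\<alpha> 0 = 1" "PP$\<alpha> 2$\<alpha> 1 = -3/2" "PP$\<alpha> 2$\<alpha> 2 = 3" "PP$\<alpha> 2$\<alpha> 3 = -7/2" "PP$\<alpha> 2$\<alpha> 4 = 9/2" "PP$\<alpha> 3$\<alpha> 0 = 3" "PP$\<alpha> 3$\<alpha> 1 = 3/2" "PP$\<alpha> 3$\<alpha> 2 = -7/2" "PP$\<alpha> 3$\<alpha> 3 = 5" "PP$\<alpha> 3$\<alpha> 4 = -13/2" "PP$\<alpha> 4$\<alpha> 0 = -4" "PP$\<alpha>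 4$\<alpha> 1 = 3/2" "PP$\<alpha> 4$\<alpha> 2 = 9/2" "PP$\<alpha> 4$\<alpha> 3 = -13/2" "PP$\<alpha> 4$\<alpha> 4 = 9"
    by (simp_all add: PP_entry bi_a pn_def p5_def p5L_def)
  have blk: "Q$\<alpha> a$\<alpha> b = PP$\<alpha> a$\<alpha> b" if "a<5" "b<5" for a b
  proof -
    have A: "a = 0 \<or> a = 1 \<or> a = 2 \<or> a = 3 \<or> a = 4" using that by auto
    have B: "b = 0 \<or> b = 1 \<or> b = 2 \<or> b = 3 \<or> b = 4" using that by auto
    from A B show ?thesis by (elim disjE; hypsubst; simp only: bk0 pp0)
  qed
  have tl1: "Q$\<alpha> a$t = PP$\<alpha> a$t \<and> Q$t$t = PP$t$t" if t: "t \<in> TT" and a: "a<5" for t a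
  proof -
    define \<iota> where "\<iota> m = (if m<5 then \<alpha> m else t)" for m
    have i5: "\<iota> 0 = \<alpha> 0" "\<iota> 1 = \<alpha> 1" "\<iota> 2 = \<alpha> 2" "\<iota> 3 = \<alpha> 3" "\<iota> 4 = \<alpha> 4" "\<iota> 5 = t"
      unfolding \<iota>_def by auto
    have bt: "bi t = 5" using bi_T[OF t] .
    define r0 where "r0 = Q$\<alpha> 0$t"
    define r1 where "r1 = Q$\<alpha> 1$t"
    define r2 where "r2 = Q$\<alpha> 2$t"
    define r3 where "r3 = Q$\<alpha> 3$t"
    define r4 where "r4 = Q$\<alpha> 4$t"
    define r5 where "r5 = Q$t$t"
    have rs: "Q$\<alpha> 0$t = r0" "Q$t$\<alpha> 0 = r0" "Q$\<alpha> 1$t = r1" "Q$t$\<alpha> 1 = r1" "Q$\<alpha> 2$t = r2" "Q$t$\<alpha> 2 = r2"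
      "Q$\<alpha> 3$t = r3" "Q$t$\<alpha> 3 = r3" "Q$\<alpha> 4$t = r4" "Q$t$\<alpha> 4 = r4" "Q$t$t = r5"
      using sy r0_def r1_def r2_def r3_def r4_def r5_def by auto

    have t0: "qf Q (lc \<iota> (\<lambda>m. [0,0,1,2,1,1]!m) 6) = 1"
      by (rule hQ1) (unfold qf_lc sum6 i5, auto simp: less6 PP_entry bi_a bt pn_def p5_def p5L_def gg_def)
    note t0 = t0[unfolded qf_lc sum6 i5 rs bk0, simplified]
    have t1: "qf Q (lc \<iota> (\<lambda>m. [0,0,0,3,2,1]!m) 6) = 1"
      by (rule hQ1) (unfold qf_lc sum6 i5, auto simp: less6 PP_entry bi_a bt pn_def p5_def p5L_def gg_def)
    note t1 = t1[unfolded qf_lc sum6 i5 rs bk0, simplified]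
    have t2: "qf Q (lc \<iota> (\<lambda>m. [0,2,2,1,0,1]!m) 6) = 1"
      by (rule hQ1) (unfold qf_lc sum6 i5, auto simp: less6 PP_entry bi_a bt pn_def p5_def p5L_def gg_def)
    note t2 = t2[unfolded qf_lc sum6 i5 rs bk0, simplified]
    have t3: "qf Q (lc \<iota> (\<lambda>m. [1,0,0,2,2,1]!m) 6) = 1"
      by (rule hQ1) (unfold qf_lc sum6 i5, auto simp: less6 PP_entry bi_a bt pn_def p5_def p5L_def gg_def)
    note t3 = t3[unfolded qf_lc sum6 i5 rs bk0, simplified]
    have t4: "qf Q (lc \<iota> (\<lambda>m. [1,3,1,0,0,1]!m) 6) = 1"
      by (rule hQ1) (unfold qf_lc sum6 i5, auto simp: less6 PP_entry bi_a bt pn_def p5_def p5L_def gg_def)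
    note t4 = t4[unfolded qf_lc sum6 i5 rs bk0, simplified]
    have t5: "qf Q (lc \<iota> (\<lambda>m. [3,2,0,0,1,1]!m) 6) = 1"
      by (rule hQ1) (unfold qf_lc sum6 i5, auto simp: less6 PP_entry bi_a bt pn_def p5_def p5L_def gg_def)
    note t5 = t5[unfolded qf_lc sum6 i5 rs bk0, simplified]
    have "r0 = 0" "r1 = -1/2" "r2 = 0" "r3 = -1/2" "r4 = -1/2" "r5 = 3"
      using t0 t1 t2 t3 t4 t5 by linarith+
    hence rt: "Q$\<alpha> 0$t = 0" "Q$\<alpha> 1$t = -1/2" "Q$\<alpha> 2$t = 0" "Q$\<alpha> 3$t = -1/2" "Q$\<alpha> 4$t = -1/2" "Q$t$t = 3"
      unfolding rs by simp_all
    have pt: "PP$\<alpha> 0$t = 0" "PP$\<alpha> 1$t = -1/2" "PP$\<alpha> 2$t = 0" "PP$\<alpha> 3$t = -1/2" "PP$\<alpha> 4$t = -1/2" "PP$t$t = 3"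
      by (simp_all add: PP_entry bi_a bt pn_def gg_def)
    have A: "a = 0 \<or> a = 1 \<or> a = 2 \<or> a = 3 \<or> a = 4" using a by auto
    from A show ?thesis by (elim disjE; hypsubst; simp only: rt pt)
  qed
  have tl2: "Q$t$u = PP$t$u" if t: "t \<in> TT" and u: "u \<in> TT" and tu: "t \<noteq> u" for t u
  proof -
    define \<iota> where "\<iota> m = (if m<5 then \<alpha> m else if m = 5 then t else u)" for m
    have i5: "\<iota> 0 = \<alpha> 0" "\<iota> 1 = \<alpha> 1" "\<iota> 2 = \<alpha> 2" "\<iota> 3 = \<alpha> 3" "\<iota> 4 = \<alpha> 4" "\<iota> 5 = t" "\<iota> 6 = u"
      unfolding \<iota>_def by auto
    have bt: "bi t = 5" "bi u = 5" using bi_T[OF t] bi_T[OF u] by auto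
    have ct0: "Q$\<alpha> 0$t = 0" "Q$t$\<alpha> 0 = 0" "Q$\<alpha> 0$u = 0" "Q$u$\<alpha> 0 = 0" "Q$\<alpha> 1$t = -1/2" "Q$t$\<alpha> 1 = -1/2" "Q$\<alpha> 1$u = -1/2" "Q$u$\<alpha> 1 = -1/2" "Q$\<alpha> 2$t = 0" "Q$t$\<alpha> 2 = 0" "Q$\<alpha> 2$u = 0" "Q$u$\<alpha> 2 = 0" "Q$\<alpha> 3$t = -1/2" "Q$t$\<alpha> 3 = -1/2" "Q$\<alpha> 3$u = -1/2" "Q$u$\<alpha> 3 = -1/2" "Q$\<alpha> 4$t = -1/2" "Q$t$\<alpha> 4 = -1/2" "Q$\<alpha> 4$u = -1/2" "Q$u$\<alpha> 4 = -1/2"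
      using tl1[OF t, of 0] tl1[OF t, of 1] tl1[OF t, of 2] tl1[OF t, of 3] tl1[OF t, of 4]
        tl1[OF u, of 0] tl1[OF u, of 1] tl1[OF u, of 2] tl1[OF u, of 3] tl1[OF u, of 4] sy
      by (simp_all add: PP_entry bi_a bt pn_def gg_def)
    have dt: "Q$t$t = 3" "Q$u$u = 3" using tl1[OF t, of 0] tl1[OF u, of 0] by (auto simp: PP_entry bt pn_def)
    have tu': "Q$u$t = Q$t$u" using sy by auto
    have e: "qf Q (lc \<iota> (\<lambda>m. [0,0,1,6,4,1,1]!m) 7) = 1"
      by (rule hQ1) (unfold qf_lc sum7 i5, auto simp: less7 PP_entry bi_a bt pn_def p5_def p5L_def gg_def)
    note e = e[unfolded qf_lc sum7 i5 bk0 ct0 dt tu', simplified]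
    have "Q$t$u = 3" using e by linarith
    thus ?thesis by (simp add: PP_entry bt pn_def)
  qed
  show "Q = PP"
  proof (rule vec_eq_iff[THEN iffD2], intro allI, rule vec_eq_iff[THEN iffD2], intro allI)
    fix i j
    show "Q$i$j = PP$i$j"
    proof (cases "i \<in> AA")
      case iA: True
      then obtain a where a: "a<5" "i = \<alpha> a" unfolding AA_def by auto
      show ?thesis
      proof (cases "j \<in> AA")
        case True
        then obtain b where "b<5" "j = \<alpha> b" unfolding AA_def by auto
        thus ?thesis using a blk by auto
      next
        case False
        hence "j \<in> TT" unfolding TT_def by auto
        thus ?thesis using a tl1 by auto
      qed
    next
      case iT: False
      hence iT: "i \<in> TT" unfolding TT_def by auto
      show ?thesis
      proof (cases "j \<in> AA")
        case True
        then obtain b where b: "b<5" "j = \<alpha> b" unfolding AA_def by auto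
        have "Q$i$j = Q$j$i" using sy by auto
        also have "\<dots> = PP$j$i" using tl1[OF iT b(1)] b by auto
        also have "\<dots> = PP$i$j" using PP_sym unfolding sym_mat_def by (metis transpose_def vec_lambda_beta)
        finally show ?thesis .
      next
        case False
        hence jT: "j \<in> TT" unfolding TT_def by auto
        show ?thesis
        proof (cases "i = j")
          case True thus ?thesis using tl1[OF iT, of 0] by auto
        next
          case False thus ?thesis using tl2[OF iT jT] by auto
        qed
      qed
    qed
  qed
qed


lemma pp0: "PP$\<alpha> 0$\<alpha> 0 = 2" "PP$\<alpha> 0$\<alpha> 1 = -1" "PP$\<alpha> 0$\<alpha> 2 = 1" "PP$\<alpha> 0$\<alpha> 3 = 3" "PP$\<alpha> 0$\<alpha> 4 = -4" "PP$\<alpha> 1$\<alpha> 0 = -1" "PP$\<alpha> 1$\<alpha> 1 = 1" "PP$\<alpha> 1$\<alpha> 2 = -3/2" "PP$\<alpha> 1$\<alpha> 3 = 3/2" "PP$\<alpha> 1$\<alpha> 4 = 3/2" "PP$\<alpha> 2$\<alpha> 0 = 1" "PP$\<alpha> 2$\<alpha> 1 = -3/2" "PP$\<alpha> 2$\<alpha> 2 = 3" "PP$\<alpha> 2$\<alpha> 3 = -7/2" "PP$\<alpha> 2$\<alpha> 4 = 9/2" "PP$\<alpha> 3$\<alpha> 0 = 3" "PP$\<alpha> 3$\<alpha> 1 = 3/2" "PP$\<alpha> 3$\<alpha> 2 = -7/2" "PP$\<alpha> 3$\<alpha> 3 = 5" "PP$\<alpha> 3$\<alpha> 4 = -13/2"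 "PP$\<alpha> 4$\<alpha> 0 = -4" "PP$\<alpha> 4$\<alpha> 1 = 3/2" "PP$\<alpha> 4$\<alpha> 2 = 9/2" "PP$\<alpha> 4$\<alpha> 3 = -13/2" "PP$\<alpha> 4$\<alpha> 4 = 9"
  by (simp_all add: PP_entry bi_a pn_def p5_def p5L_def)

lemma PP_exc: "PP \<notin> PSD_plus_NN"
proof
  assume "PP \<in> PSD_plus_NN"
  then obtain S N where SN: "PP = S + N" "S \<in> PSD" "N \<in> NN" unfolding PSD_plus_NN_def by blast
  have Sp: "\<And>x. 0 \<le> qf S x" using SN(2) unfolding PSD_def by auto
  have Np: "\<And>i j. 0 \<le> N$i$j" using SN(3) unfolding NN_def by auto
  define n00 where "n00 = N$\<alpha> 0$\<alpha> 0"
  define n01 where "n01 = N$\<alpha> 0$\<alpha> 1"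
  define n02 where "n02 = N$\<alpha> 0$\<alpha> 2"
  define n03 where "n03 = N$\<alpha> 0$\<alpha> 3"
  define n04 where "n04 = N$\<alpha> 0$\<alpha> 4"
  define n10 where "n10 = N$\<alpha> 1$\<alpha> 0"
  define n11 where "n11 = N$\<alpha> 1$\<alpha> 1"
  define n12 where "n12 = N$\<alpha> 1$\<alpha> 2"
  define n13 where "n13 = N$\<alpha> 1$\<alpha> 3"
  define n14 where "n14 = N$\<alpha> 1$\<alpha> 4"
  define n20 where "n20 = N$\<alpha> 2$\<alpha> 0"
  define n21 where "n21 = N$\<alpha> 2$\<alpha> 1"
  define n22 where "n22 = N$\<alpha> 2$\<alpha> 2"
  define n23 where "n23 = N$\<alpha> 2$\<alpha> 3"
  define n24 where "n24 = N$\<alpha> 2$\<alpha> 4"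
  define n30 where "n30 = N$\<alpha> 3$\<alpha> 0"
  define n31 where "n31 = N$\<alpha> 3$\<alpha> 1"
  define n32 where "n32 = N$\<alpha> 3$\<alpha> 2"
  define n33 where "n33 = N$\<alpha> 3$\<alpha> 3"
  define n34 where "n34 = N$\<alpha> 3$\<alpha> 4"
  define n40 where "n40 = N$\<alpha> 4$\<alpha> 0"
  define n41 where "n41 = N$\<alpha> 4$\<alpha> 1"
  define n42 where "n42 = N$\<alpha> 4$\<alpha> 2"
  define n43 where "n43 = N$\<alpha> 4$\<alpha> 3"
  define n44 where "n44 = N$\<alpha> 4$\<alpha> 4"
  have nn: "0 \<le> n00" "0 \<le> n01" "0 \<le> n02" "0 \<le> n03" "0 \<le> n04" "0 \<le> n10" "0 \<le> n11" "0 \<le> n12" "0 \<le> n13" "0 \<le> n14" "0 \<le> n20" "0 \<le> n21" "0 \<le> n22" "0 \<le> n23" "0 \<le> n24" "0 \<le> n30" "0 \<le> n31" "0 \<le> n32" "0 \<le> n33" "0 \<le> n34" "0 \<le> n40" "0 \<le> n41" "0 \<le> n42" "0 \<le> n43" "0 \<le> n44"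
    unfolding n00_def n01_def n02_def n03_def n04_def n10_def n11_def n12_def n13_def n14_def n20_def n21_def n22_def n23_def n24_def n30_def n31_def n32_def n33_def n34_def n40_def n41_def n42_def n43_def n44_def using Np by auto
  have v0: "qf PP (lc \<alpha> (\<lambda>m. [0,2,2,1,0]!m) 5) = 1" unfolding qf_lc sum5 pp0 by simp
  have v1: "qf PP (lc \<alpha> (\<lambda>m. [1,2,2,2,1]!m) 5) = 21" unfolding qf_lc sum5 pp0 by simp
  have v2: "qf PP (lc \<alpha> (\<lambda>m. [2,-1,-1,1,2]!m) 5) = -16" unfolding qf_lc sum5 pp0 by simp
  have v3: "qf PP (lc \<alpha> (\<lambda>m. [2,2,0,-1,0]!m) 5) = -9" unfolding qf_lc sum5 pp0 by simp
  have Nn: "0 \<le> 1 * qf N (lc \<alpha> (\<lambda>m. [0,2,2,1,0]!m) 5) + 2 * qf N (lc \<alpha> (\<lambda>m. [1,2,2,2,1]!m) 5) + 2 * qf N (lc \<alpha> (\<lambda>m. [2,-1,-1,1,2]!m) 5) + 4 * qf N (lc \<alpha> (\<lambda>m. [2,2,0,-1,0]!m) 5)"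
    unfolding qf_lc sum5 n00_def[symmetric] n01_def[symmetric] n02_def[symmetric] n03_def[symmetric] n04_def[symmetric] n10_def[symmetric] n11_def[symmetric] n12_def[symmetric] n13_def[symmetric] n14_def[symmetric] n20_def[symmetric] n21_def[symmetric] n22_def[symmetric] n23_def[symmetric] n24_def[symmetric] n30_def[symmetric] n31_def[symmetric] n32_def[symmetric] n33_def[symmetric] n34_def[symmetric] n40_def[symmetric] n41_def[symmetric] n42_def[symmetric] n43_def[symmetric] n44_def[symmetric]
    using nn by simp
  have Sn: "0 \<le> 1 * qf S (lc \<alpha> (\<lambda>m. [0,2,2,1,0]!m) 5) + 2 * qf S (lc \<alpha> (\<lambda>m. [1,2,2,2,1]!m) 5) + 2 * qf S (lc \<alpha> (\<lambda>m. [2,-1,-1,1,2]!m) 5) + 4 * qf S (lc \<alpha> (\<lambda>m. [2,2,0,-1,0]!m) 5)"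
    using Sp by (intro add_nonneg_nonneg mult_nonneg_nonneg) auto
  have "1 * qf PP (lc \<alpha> (\<lambda>m. [0,2,2,1,0]!m) 5) + 2 * qf PP (lc \<alpha> (\<lambda>m. [1,2,2,2,1]!m) 5) + 2 * qf PP (lc \<alpha> (\<lambda>m. [2,-1,-1,1,2]!m) 5) + 4 * qf PP (lc \<alpha> (\<lambda>m. [2,2,0,-1,0]!m) 5) = -25"
    unfolding v0 v1 v2 v3 by simp
  moreover have "1 * qf PP (lc \<alpha> (\<lambda>m. [0,2,2,1,0]!m) 5) + 2 * qf PP (lc \<alpha> (\<lambda>m. [1,2,2,2,1]!m) 5) + 2 * qf PP (lc \<alpha> (\<lambda>m. [2,-1,-1,1,2]!m) 5) + 4 * qf PP (lc \<alpha> (\<lambda>m. [2,2,0,-1,0]!m) 5) = (1 * qf S (lc \<alpha> (\<lambda>m. [0,2,2,1,0]!m) 5) + 2 * qf S (lc \<alpha> (\<lambda>m. [1,2,2,2,1]!m) 5) + 2 * qf S (lc \<alpha> (\<lambda>m. [2,-1,-1,1,2]!m) 5) + 4 * qf S (lc \<alpha> (\<lambda>m. [2,2,0,-1,0]!m) 5)) + (1 * qf N (lc \<alpha> (\<lambda>m. [0,2,2,1,0]!m) 5) + 2 * qf N (lc \<alpha> (\<lambda>m. [1,2,2,2,1]!m) 5) + 2 * qf N (lc \<alpha> (\<lambda>m. [2,-1,-1,1,2]!m) 5) + 4 * qf N (lc \<alpha> (\<lambda>m. [2,2,0,-1,0]!m) 5))"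
    unfolding SN(1) qf_add_mat by (simp add: algebra_simps)
  ultimately show False using Sn Nn by linarith
qed



end

theorem corollary5p7:
  assumes "CARD('n::finite) \<ge> 5"
  shows "\<exists>P :: real^'n^'n. perfect_copositive P \<and> P \<in> COP \<and> P \<notin> PSD_plus_NN"
proof -
  obtain A :: "'n set" where A: "card A = 5" "finite A"
    using obtain_subset_with_card_n[of 5 "UNIV::'n set"] assms by auto
  obtain \<alpha> where "bij_betw \<alpha> {0..<card A} A" using ex_bij_betw_nat_finite[OF A(2)] by blast
  hence "inj_on \<alpha> {..<5}" using A(1) by (simp add: bij_betw_def atLeast0LessThan)
  then interpret cons5 \<alpha> by unfold_locales
  have "perfect_copositive PP"
    unfolding perfect_copositive_def
  proof (intro conjI)
    show "strictly_copositive PP" by (rule PP_strict)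
    show "\<exists>!Q. sym_mat Q \<and> (\<forall>v\<in>Min_COP PP. qf Q v = min_COP PP)"
    proof (rule ex1I[of _ PP])
      show "sym_mat PP \<and> (\<forall>v\<in>Min_COP PP. qf PP v = min_COP PP)"
        using PP_sym unfolding Min_COP_def by auto
      show "\<And>Q. sym_mat Q \<and> (\<forall>v\<in>Min_COP PP. qf Q v = min_COP PP) \<Longrightarrow> Q = PP"
        using PP_unique by blast
    qed
    show "sym_mat PP" by (rule PP_sym)
    show "\<forall>v\<in>Min_COP PP. qf PP v = min_COP PP" unfolding Min_COP_def by auto
  qed
  moreover have "PP \<in> COP" using PP_strict unfolding strictly_copositive_def by auto
  ultimately show ?thesis using PP_exc by blast
qed


end
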